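(* Every unambiguous GFG automaton is determinizable by pruning.
   Context: An automaton is $\mathcal{A}=\langle\Sigma,Q,Q_0,\delta,\alpha\rangle$ with $\delta:Q\times\Sigma\to2^Q$ and an acceptance condition $\alpha$ (Büchi, co-Büchi, parity, Rabin or Streett) determining which runs (sequences $r_0r_1\cdots$ with $r_0\in Q_0$, $r_{i+1}\in\delta(r_i,a_{i+1})$) are accepting. It is unambiguous if every word in $L(\mathcal{A})$ has a single accepting run. It is good for games (GFG) if there is a strategy $g:\Sigma^*\to Q$ such that for every $w=a_1a_2\cdots$, $g(\epsilon),g(a_1),g(a_1a_2),\ldots$ is a run on $w$ that is accepting whenever $w\in L(\mathcal{A})$. $\mathcal{A}$ is determinizable by pruning if there are $q_0\in Q_0$ and $\delta':Q\times\Sigma\to Q$ with $\delta'(q,a)\in\delta(q,a)$ for all $q,a$ such that the deterministic automaton $\langle\Sigma,Q,q_0,\delta',\alpha\rangle$ recognizes $L(\mathcal{A})$. *)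

theory Defs
  imports Main
begin

datatype 'q acc_cond =
    Buchi "'q set"
  | CoBuchi "'q set"
  | Parity "'q \<Rightarrow> nat"
  | Rabin "('q set \<times> 'q set) list"
  | Streett "('q set \<times> 'q set) list"

record ('a, 'q) automaton =
  states :: "'q set"
  init :: "'q set"
  trans :: "'q \<Rightarrow> 'a \<Rightarrow> 'q set"
  acc :: "'q acc_cond"

definition wf_automaton :: "('a, 'q) automaton \<Rightarrow> bool" where
  "wf_automaton A \<longleftrightarrow> finite (states A) \<and> init A \<subseteq> states A \<and>
     (\<forall>q\<in>states A. \<forall>a. trans A q a \<subseteq> states A)"

definition complete_automaton :: "('a, 'q) automaton \<Rightarrow> bool" where
  "complete_automaton A \<longleftrightarrow> init A \<noteq> {} \<and> (\<forall>q\<in>states A. \<forall>a. trans A q a \<noteq> {})"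

definition inf_states :: "(nat \<Rightarrow> 'q) \<Rightarrow> 'q set" where
  "inf_states r = {q. \<exists>\<^sub>\<infinity> i. r i = q}"

fun acc_holds :: "'q acc_cond \<Rightarrow> 'q set \<Rightarrow> bool" where
  "acc_holds (Buchi F) I \<longleftrightarrow> I \<inter> F \<noteq> {}"
| "acc_holds (CoBuchi F) I \<longleftrightarrow> I \<inter> F = {}"
| "acc_holds (Parity p) I \<longleftrightarrow> even (Min (p ` I))"
| "acc_holds (Rabin ps) I \<longleftrightarrow> (\<exists>(B, G)\<in>set ps. I \<inter> B = {} \<and> I \<inter> G \<noteq> {})"
| "acc_holds (Streett ps) I \<longleftrightarrow> (\<forall>(B, G)\<in>set ps. I \<inter> G \<noteq> {} \<longrightarrow> I \<inter> B \<noteq> {})"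

text \<open>A run on the infinite word w = w 0, w 1, ... (w i is the letter a_{i+1}).\<close>
definition is_run :: "('a, 'q) automaton \<Rightarrow> (nat \<Rightarrow> 'a) \<Rightarrow> (nat \<Rightarrow> 'q) \<Rightarrow> bool" where
  "is_run A w r \<longleftrightarrow> r 0 \<in> init A \<and> (\<forall>i. r (Suc i) \<in> trans A (r i) (w i))"

definition accepting :: "('a, 'q) automaton \<Rightarrow> (nat \<Rightarrow> 'q) \<Rightarrow> bool" where
  "accepting A r \<longleftrightarrow> acc_holds (acc A) (inf_states r)"

definition accepting_run :: "('a, 'q) automaton \<Rightarrow> (nat \<Rightarrow> 'a) \<Rightarrow> (nat \<Rightarrow> 'q) \<Rightarrow> bool" where
  "accepting_run A w r \<longleftrightarrow> is_run A w r \<and> accepting A r"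

definition language :: "('a, 'q) automaton \<Rightarrow> (nat \<Rightarrow> 'a) set" where
  "language A = {w. \<exists>r. accepting_run A w r}"

definition unambiguous :: "('a, 'q) automaton \<Rightarrow> bool" where
  "unambiguous A \<longleftrightarrow> (\<forall>w\<in>language A. \<exists>!r. accepting_run A w r)"

definition prefix :: "(nat \<Rightarrow> 'a) \<Rightarrow> nat \<Rightarrow> 'a list" where
  "prefix w i = map w [0..<i]"

definition gfg :: "('a, 'q) automaton \<Rightarrow> bool" where
  "gfg A \<longleftrightarrow> (\<exists>g :: 'a list \<Rightarrow> 'q. \<forall>w.
      is_run A w (\<lambda>i. g (prefix w i)) \<and>
      (w \<in> language A \<longrightarrow> accepting A (\<lambda>i. g (prefix w i))))"

definition det_by_pruning :: "('a, 'q) automaton \<Rightarrow> bool" where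
  "det_by_pruning A \<longleftrightarrow> (\<exists>q0\<in>init A. \<exists>\<delta>' :: 'q \<Rightarrow> 'a \<Rightarrow> 'q.
      (\<forall>q\<in>states A. \<forall>a. \<delta>' q a \<in> trans A q a) \<and>
      language \<lparr>states = states A, init = {q0}, trans = (\<lambda>q a. {\<delta>' q a}), acc = acc A\<rparr>
        = language A)"

end

theory Submission
  imports Defs "HOL-Library.Infinite_Set"
begin

lemma inf_states_shift: "inf_states (\<lambda>j. f (j + n)) = inf_states f"
proof -
  have "(\<exists>\<^sub>\<infinity>j. f (j + n) = q) \<longleftrightarrow> (\<exists>\<^sub>\<infinity>j. f j = q)" for q
  proof
    assume "\<exists>\<^sub>\<infinity>j. f (j + n) = q"
    then show "\<exists>\<^sub>\<infinity>j. f j = q" unfolding INFM_nat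
    proof (intro allI)
      fix m
      assume h: "\<forall>m. \<exists>j>m. f (j + n) = q"
      then obtain j where "j > m" "f (j + n) = q" by blast
      then show "\<exists>k>m. f k = q" by (intro exI[of _ "j + n"]) auto
    qed
  next
    assume h: "\<exists>\<^sub>\<infinity>j. f j = q"
    show "\<exists>\<^sub>\<infinity>j. f (j + n) = q" unfolding INFM_nat
    proof
      fix m
      from h obtain k where "k > m + n" "f k = q" unfolding INFM_nat by blast
      then show "\<exists>j>m. f (j + n) = q" by (intro exI[of _ "k - n"]) auto
    qed
  qed
  then show ?thesis unfolding inf_states_def by auto
qed

definition good :: "('a, 'q) automaton \<Rightarrow> 'q \<Rightarrow> bool" where
  "good A q \<longleftrightarrow> (\<exists>v r. r 0 = q \<and> (\<forall>j. r (Suc j) \<in> trans A (r j) (v j)) \<and> accepting A r)"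

lemma claim:
  assumes un: "unambiguous A"
    and g: "\<forall>w. is_run A w (\<lambda>i. g (prefix w i)) \<and>
      (w \<in> language A \<longrightarrow> accepting A (\<lambda>i. g (prefix w i)))"
    and r0: "\<rho> 0 \<in> init A"
    and st: "\<forall>j<n. \<rho> (Suc j) \<in> trans A (\<rho> j) (w j)"
    and gd: "good A (\<rho> n)"
  shows "\<rho> n = g (prefix w n)"
proof -
  obtain v r where r: "r 0 = \<rho> n" "\<forall>j. r (Suc j) \<in> trans A (r j) (v j)" "accepting A r"
    using gd unfolding good_def by blast
  define w' where "w' j = (if j < n then w j else v (j - n))" for j
  define R where "R j = (if j < n then \<rho> j else r (j - n))" for j
  have "is_run A w' R"
    unfolding is_run_def
  proof (intro conjI allI)
    show "R 0 \<in> init A" using r0 r(1) by (cases n) (auto simp: R_def)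
  next
    fix j
    show "R (Suc j) \<in> trans A (R j) (w' j)"
    proof (cases "Suc j < n")
      case True then show ?thesis using st by (auto simp: R_def w'_def)
    next
      case False
      show ?thesis
      proof (cases "Suc j = n")
        case True then show ?thesis using st r(1) by (auto simp: R_def w'_def)
      next
        case False
        then have "j \<ge> n" using \<open>\<not> Suc j < n\<close> by auto
        then have "Suc j - n = Suc (j - n)" by auto
        then show ?thesis using r(2) \<open>j \<ge> n\<close> by (auto simp: R_def w'_def)
      qed
    qed
  qed
  moreover have "(\<lambda>j. R (j + n)) = r" by (auto simp: R_def)
  then have "inf_states R = inf_states r" using inf_states_shift[of R n] by simp
  then have "accepting A R" using r(3) by (simp add: accepting_def)
  ultimately have ar: "accepting_run A w' R" by (simp add: accepting_run_def)
  then have wl: "w' \<in> language A" by (auto simp: language_def)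
  then have "accepting_run A w' (\<lambda>i. g (prefix w' i))"
    using g by (simp add: accepting_run_def)
  moreover have "\<exists>!r. accepting_run A w' r" using un wl by (simp add: unambiguous_def)
  ultimately have "R = (\<lambda>i. g (prefix w' i))" using ar by blast
  then have "R n = g (prefix w' n)" by metis
  moreover have "prefix w' n = prefix w n" by (simp add: prefix_def w'_def)
  moreover have "R n = \<rho> n" using r(1) by (simp add: R_def)
  ultimately show ?thesis by simp
qed

theorem proposition9:
  fixes A :: "('a :: finite, 'q) automaton"
  assumes "wf_automaton A"
    and "complete_automaton A"
    and "unambiguous A"
    and "gfg A"
  shows "det_by_pruning A"
proof -
  obtain g :: "'a list \<Rightarrow> 'q" where g: "\<forall>w. is_run A w (\<lambda>i. g (prefix w i)) \<and>
      (w \<in> language A \<longrightarrow> accepting A (\<lambda>i. g (prefix w i)))"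
    using assms(4) unfolding gfg_def by blast
  define q0 where "q0 = g []"
  have q0: "q0 \<in> init A" using g unfolding is_run_def q0_def
    by (metis (no_types) list.simps(8) prefix_def upt_0)
  define d where "d q a = (if \<exists>q'\<in>trans A q a. good A q' then SOME q'. q' \<in> trans A q a \<and> good A q'
      else SOME q'. q' \<in> trans A q a)" for q a
  have d_in: "d q a \<in> trans A q a" if "q \<in> states A" for q a
  proof -
    have "trans A q a \<noteq> {}" using assms(2) that by (auto simp: complete_automaton_def)
    then have e: "\<exists>q'. q' \<in> trans A q a" by blast
    show ?thesis
    proof (cases "\<exists>q'\<in>trans A q a. good A q'")
      case True
      then have "\<exists>q'. q' \<in> trans A q a \<and> good A q'" by blast
      from someI_ex[OF this] True show ?thesis unfolding d_def by simp
    next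
      case False
      from someI_ex[OF e] False show ?thesis unfolding d_def by simp
    qed
  qed
  have d_good: "d q a \<in> trans A q a \<and> good A (d q a)" if "q' \<in> trans A q a" "good A q'" for q a q'
  proof -
    have T: "\<exists>q'\<in>trans A q a. good A q'" using that by blast
    then have "\<exists>q'. q' \<in> trans A q a \<and> good A q'" by blast
    from someI_ex[OF this] T show ?thesis unfolding d_def by simp
  qed
  define B where "B = \<lparr>states = states A, init = {q0}, trans = (\<lambda>q a. {d q a}), acc = acc A\<rparr>"
  have "language B = language A"
  proof
    show "language B \<subseteq> language A"
    proof
      fix w assume "w \<in> language B"
      then obtain r where r: "r 0 = q0" "\<forall>i. r (Suc i) = d (r i) (w i)" "accepting B r"
        by (auto simp: language_def accepting_run_def is_run_def B_def)
      have rs: "r i \<in> states A" for i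
      proof (induction i)
        case 0 then show ?case using q0 r(1) assms(1) by (auto simp: wf_automaton_def)
      next
        case (Suc i)
        have "d (r i) (w i) \<in> trans A (r i) (w i)" using d_in Suc by blast
        moreover have "trans A (r i) (w i) \<subseteq> states A" using Suc assms(1) by (auto simp: wf_automaton_def)
        ultimately show ?case using r(2) by auto
      qed
      have "accepting_run A w r"
        unfolding accepting_run_def is_run_def using r rs d_in q0
        by (auto simp: accepting_def B_def)
      then show "w \<in> language A" by (auto simp: language_def)
    qed
  next
    show "language A \<subseteq> language B"
    proof
      fix w assume wl: "w \<in> language A"
      define G where "G i = g (prefix w i)" for i
      have Grun: "is_run A w G" and Gacc: "accepting A G" using g wl unfolding G_def[abs_def] by auto
      have Ggood: "good A (G i)" for i
        unfolding good_def
      proof (intro exI conjI)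
        show "(\<lambda>j. G (j + i)) 0 = G i" by simp
        show "\<forall>j. (\<lambda>j. G (j + i)) (Suc j) \<in> trans A ((\<lambda>j. G (j + i)) j) ((\<lambda>j. w (j + i)) j)"
          using Grun by (simp add: is_run_def)
        show "accepting A (\<lambda>j. G (j + i))"
          using Gacc inf_states_shift[of G i] by (simp add: accepting_def)
      qed
      have step: "G (Suc i) = d (G i) (w i)" for i
      proof -
        have h: "G (Suc i) \<in> trans A (G i) (w i)" using Grun by (simp add: is_run_def)
        from d_good[OF h Ggood] have dg: "d (G i) (w i) \<in> trans A (G i) (w i)" "good A (d (G i) (w i))"
          by auto
        define \<rho> where "\<rho> j = (if j \<le> i then G j else d (G i) (w i))" for j
        have "\<rho> (Suc i) = g (prefix w (Suc i))"
        proof (rule claim[OF assms(3) g])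
          show "\<rho> 0 \<in> init A" using Grun by (simp add: \<rho>_def is_run_def)
          show "\<forall>j<Suc i. \<rho> (Suc j) \<in> trans A (\<rho> j) (w j)"
            using Grun dg by (auto simp: \<rho>_def is_run_def less_Suc_eq)
          show "good A (\<rho> (Suc i))" using dg by (simp add: \<rho>_def)
        qed
        then show ?thesis by (simp add: \<rho>_def G_def)
      qed
      have "accepting_run B w G"
        unfolding accepting_run_def is_run_def using step Gacc
        by (auto simp: B_def accepting_def G_def q0_def prefix_def)
      then show "w \<in> language B" by (auto simp: language_def)
    qed
  qed
  then show ?thesis unfolding det_by_pruning_def B_def using q0 d_in by blast
qed

end
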